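(* Let $p,q\in(0,1/2)$ and let $S_1(x)=px$, $S_2(x)=qx$, $S_3(x)=px+1-p$, $S_4(x)=qx+1-q$ be maps $\mathbb R\to\mathbb R$. Let $K=K_{pq}$ be the attractor of $\{S_1,S_2,S_3,S_4\}$ and $A=S_3(K)\cup S_4(K)$. Then: (i) $S_1S_2=S_2S_1$ and $S_3S_4=S_4S_3$; (ii) $K=\omega(K)$, where $\omega(x)=1-x$; (iii) for $i=1,2$ and any integers $m\neq n$, $S_i^m(A)\cap S_i^n(A)=\varnothing$; (iv) for any integers $m,n\ge 0$, $S_1^mS_2^n(K)\subseteq S_1^m(K)\cap S_2^n(K)$; (v) $K\setminus\{0\}=\bigcup_{m,n=0}^{\infty}S_1^mS_2^n(A)$.
   Context: The attractor of a finite system of contractions $\{S_1,\dots,S_m\}$ of $\mathbb R$ is the unique nonempty compact set $K$ with $K=\bigcup_i S_i(K)$. Powers $S_i^m$ denote $m$-fold composition (with $S_i^0=\mathrm{Id}$ and negative powers meaning powers of the inverse map). *)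

theory Defs
  imports "HOL-Analysis.Analysis"
begin

definition attractor :: "(real \<Rightarrow> real) set \<Rightarrow> real set" where
  "attractor Ss = (THE K. K \<noteq> {} \<and> compact K \<and> K = (\<Union>S\<in>Ss. S ` K))"

definition int_pow :: "(real \<Rightarrow> real) \<Rightarrow> int \<Rightarrow> (real \<Rightarrow> real)" where
  "int_pow f m = (if 0 \<le> m then f ^^ nat m else (inv f) ^^ nat (- m))"

end

theory Submission
  imports Defs
begin
lemma ifs_sub:
  fixes Ss :: "(real \<Rightarrow> real) set" and c :: real
  assumes lip: "\<And>S x y. S\<in>Ss \<Longrightarrow> \<bar>S x - S y\<bar> \<le> c*\<bar>x-y\<bar>" and c: "0 \<le> c" "c < 1"
    and K: "compact K" "K = (\<Union>S\<in>Ss. S`K)"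
    and L: "compact L" "L \<noteq> {}" "L = (\<Union>S\<in>Ss. S`L)"
  shows "K \<subseteq> L"
proof
  fix x assume xK: "x \<in> K"
  have "bounded (K \<union> L)" using K L compact_imp_bounded by blast
  then obtain B where B: "\<forall>x\<in>K\<union>L. \<bar>x\<bar> \<le> B" unfolding bounded_real by blast
  have step: "\<forall>x\<in>K. \<exists>z\<in>L. \<bar>x-z\<bar> \<le> c^n*(2*B)" for n
  proof (induction n)
    case 0
    show ?case
    proof
      fix x assume "x \<in> K"
      obtain z where "z \<in> L" using L by blast
      moreover have "\<bar>x\<bar> \<le> B" "\<bar>z\<bar> \<le> B" using B \<open>x\<in>K\<close> \<open>z\<in>L\<close> by auto
      ultimately show "\<exists>z\<in>L. \<bar>x-z\<bar> \<le> c^0*(2*B)" by (intro bexI[of _ z]) auto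
    qed
  next
    case (Suc n)
    show ?case
    proof
      fix x assume "x \<in> K"
      then obtain S y where S: "S \<in> Ss" "y \<in> K" "x = S y" using K(2) by blast
      then obtain z where z: "z \<in> L" "\<bar>y-z\<bar> \<le> c^n*(2*B)" using Suc by blast
      have "S z \<in> L" using z S L(3) by blast
      moreover have "\<bar>x - S z\<bar> \<le> c^Suc n*(2*B)"
      proof -
        have "\<bar>x - S z\<bar> \<le> c*\<bar>y-z\<bar>" using lip S by simp
        also have "\<dots> \<le> c*(c^n*(2*B))" using z c by (simp add: mult_left_mono)
        finally show ?thesis by simp
      qed
      ultimately show "\<exists>z\<in>L. \<bar>x-z\<bar> \<le> c^Suc n*(2*B)" by blast
    qed
  qed
  then have "\<forall>n. \<exists>z. z \<in> L \<and> \<bar>x-z\<bar> \<le> c^n*(2*B)" using xK by blast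
  then obtain f where f: "\<And>n. f n \<in> L" "\<And>n. \<bar>x - f n\<bar> \<le> c^n*(2*B)" by metis
  have "(\<lambda>n. c^n*(2*B)) \<longlonglongrightarrow> 0"
    using c by (intro tendsto_mult_left_zero LIMSEQ_power_zero) auto
  then have "(\<lambda>n. f n - x) \<longlonglongrightarrow> 0"
    by (rule Lim_null_comparison[rotated]) (use f in \<open>auto simp: abs_minus_commute\<close>)
  then have "f \<longlonglongrightarrow> x" using Lim_null by blast
  then show "x \<in> L" using closed_sequentially[of L f x] f L compact_imp_closed by blast
qed

lemma ifs_exists:
  fixes Ss :: "(real \<Rightarrow> real) set"
  assumes fin: "finite Ss" and cont: "\<And>S. S\<in>Ss \<Longrightarrow> continuous_on UNIV S"
    and inj: "\<And>S. S\<in>Ss \<Longrightarrow> inj S" and into: "\<And>S. S\<in>Ss \<Longrightarrow> S`I \<subseteq> I"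
    and I: "compact I" and x0: "x0 \<in> I" "S0 \<in> Ss" "S0 x0 = x0"
  shows "\<exists>K. compact K \<and> K \<noteq> {} \<and> K = (\<Union>S\<in>Ss. S`K) \<and> K \<subseteq> I"
proof -
  define F where "F = (\<lambda>X. \<Union>S\<in>Ss. S`X)"
  have monoF: "X \<subseteq> Y \<Longrightarrow> F X \<subseteq> F Y" for X Y unfolding F_def by blast
  have FI: "F I \<subseteq> I" using into unfolding F_def by blast
  have dec: "(F^^Suc n) I \<subseteq> (F^^n) I" for n
    by (induction n) (use FI monoF in auto)
  have dec2: "m \<le> n \<Longrightarrow> (F^^n) I \<subseteq> (F^^m) I" for m n
    by (induction n rule: dec_induct) (use dec in auto)
  have cpt: "compact ((F^^n) I)" for n
  proof (induction n)
    case 0 then show ?case using I by simp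
  next
    case (Suc n)
    show ?case unfolding funpow.simps comp_def F_def
      by (intro compact_UN fin compact_continuous_image continuous_on_subset[OF cont])
        (use Suc in \<open>auto simp: F_def\<close>)
  qed
  have x0in: "x0 \<in> (F^^n) I" for n
    by (induction n) (use x0 in \<open>auto simp: F_def\<close>, metis image_eqI)
  define K where "K = (\<Inter>n. (F^^n) I)"
  have "compact K" unfolding K_def by (rule compact_Inter) (use cpt in auto)
  moreover have "K \<noteq> {}" using x0in unfolding K_def by blast
  moreover have "K \<subseteq> I" unfolding K_def by (metis INT_lower UNIV_I funpow_0)
  moreover have "F K \<subseteq> K"
  proof -
    have "F K \<subseteq> (F^^n) I" for n
    proof -
      have "F K \<subseteq> F ((F^^n) I)" using monoF unfolding K_def by blast
      also have "\<dots> \<subseteq> (F^^n) I" using dec by simp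
      finally show ?thesis .
    qed
    then show ?thesis unfolding K_def by blast
  qed
  moreover have "K \<subseteq> F K"
  proof
    fix x assume xK: "x \<in> K"
    have "\<exists>S\<in>Ss. \<forall>n. x \<in> S ` ((F^^n) I)"
    proof (rule ccontr)
      assume "\<not> ?thesis"
      then have "\<forall>S\<in>Ss. \<exists>n. x \<notin> S ` ((F^^n) I)" by blast
      then obtain nn where nn: "\<And>S. S\<in>Ss \<Longrightarrow> x \<notin> S ` ((F^^nn S) I)" by metis
      define N where "N = Max (nn ` Ss)"
      have "x \<in> (F^^Suc N) I" using xK unfolding K_def by blast
      then obtain S where S: "S \<in> Ss" "x \<in> S ` ((F^^N) I)" by (auto simp: F_def)
      have "nn S \<le> N" unfolding N_def using fin S by simp
      then have "S ` ((F^^N) I) \<subseteq> S ` ((F^^nn S) I)" using dec2 by blast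
      then show False using nn S by blast
    qed
    then obtain S where S: "S \<in> Ss" "\<And>n. x \<in> S ` ((F^^n) I)" by blast
    obtain y where y: "y \<in> I" "x = S y" using S(2)[of 0] by auto
    have "y \<in> (F^^n) I" for n
    proof -
      obtain z where "z \<in> (F^^n) I" "x = S z" using S(2)[of n] by auto
      then show ?thesis using inj[OF S(1)] y by (metis injD)
    qed
    then have "y \<in> K" unfolding K_def by blast
    then show "x \<in> F K" using S y unfolding F_def by blast
  qed
  ultimately show ?thesis unfolding F_def by blast
qed
lemma funpow_scale: "((\<lambda>x::real. c*x) ^^ n) = (\<lambda>x. c^n * x)"
  by (induction n) auto

lemma int_pow_scale:
  assumes r: "0 < (r::real)"
  shows "int_pow (\<lambda>x. r*x) m = (\<lambda>x. r powr (of_int m) * x)"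
proof (cases "0 \<le> m")
  case True
  then have "real (nat m) = of_int m" by simp
  then show ?thesis using True r unfolding int_pow_def funpow_scale
    by (metis powr_realpow)
next
  case False
  have inv: "inv (\<lambda>x. r*x) = (\<lambda>x. inverse r * x)"
    by (rule inv_equality) (use r in auto)
  have "r powr (of_int m) = inverse (r powr (real (nat (-m))))"
    using False by (simp add: powr_minus[symmetric])
  also have "\<dots> = inverse r ^ nat (-m)" using r by (simp add: powr_realpow power_inverse)
  finally show ?thesis using False unfolding int_pow_def inv funpow_scale by simp
qed

lemma disj_aux:
  assumes r: "0 < (r::real)" "r < 1/2" and mn: "m < (n::int)"
    and a: "1/2 < a" and b: "b \<le> 1" "0 \<le> b" and eq: "r powr m * a = r powr n * b"
  shows False
proof -
  have "a = r powr n / r powr m * b" using eq r by (simp add: field_simps)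
  also have "r powr n / r powr m = r powr (of_int (n - m))" using r by (simp add: powr_diff)
  also have "\<dots> = r ^ nat (n-m)" using r mn by (metis of_nat_nat less_imp_le powr_realpow diff_ge_0_iff_ge)
  also have "\<dots> \<le> r ^ 1" using r mn by (intro power_decreasing) auto
  finally have "a \<le> r * b" using b r by (simp add: mult_right_mono)
  also have "\<dots> \<le> r" using b r by (simp add: mult_left_le)
  finally show False using r a by simp
qed

lemma disj_int_pow:
  assumes r: "0 < (r::real)" "r < 1/2" and A: "A \<subseteq> {1/2<..1}" and mn: "m \<noteq> n"
  shows "int_pow (\<lambda>x. r*x) m ` A \<inter> int_pow (\<lambda>x. r*x) n ` A = {}"
proof -
  have "False" if "a \<in> A" "b \<in> A" "r powr m * a = r powr n * b" for a b
  proof (cases "m < n")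
    case True
    have "1/2 < a" "b \<le> 1" "0 \<le> b" using A that by force+
    then show ?thesis using disj_aux[OF r True, of a b] that by auto
  next
    case False then have "n < m" using mn by simp
    have "1/2 < b" "a \<le> 1" "0 \<le> a" using A that by force+
    then show ?thesis using disj_aux[OF r \<open>n<m\<close>, of b a] that by auto
  qed
  then show ?thesis unfolding int_pow_scale[OF r(1)] by blast
qed
theorem proposition1:
  fixes p q :: real and S1 S2 S3 S4 :: "real \<Rightarrow> real" and K A :: "real set"
  assumes "0 < p" "p < 1/2" "0 < q" "q < 1/2"
    and "S1 = (\<lambda>x. p * x)" "S2 = (\<lambda>x. q * x)"
    and "S3 = (\<lambda>x. p * x + 1 - p)" "S4 = (\<lambda>x. q * x + 1 - q)"
    and "K = attractor {S1, S2, S3, S4}"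
    and "A = S3 ` K \<union> S4 ` K"
  shows "(S1 \<circ> S2 = S2 \<circ> S1 \<and> S3 \<circ> S4 = S4 \<circ> S3)
    \<and> K = (\<lambda>x. 1 - x) ` K
    \<and> (\<forall>S\<in>{S1, S2}. \<forall>m n :: int. m \<noteq> n \<longrightarrow>
           int_pow S m ` A \<inter> int_pow S n ` A = {})
    \<and> (\<forall>m n :: nat. (S1 ^^ m \<circ> S2 ^^ n) ` K \<subseteq> (S1 ^^ m) ` K \<inter> (S2 ^^ n) ` K)
    \<and> K - {0} = (\<Union>m::nat. \<Union>n::nat. (S1 ^^ m \<circ> S2 ^^ n) ` A)"
proof -
  note pq = assms(1-4)
  note defs = assms(5-8)
  define Ss where "Ss = {S1, S2, S3, S4}"
  have lip: "\<bar>S x - S y\<bar> \<le> (1/2)*\<bar>x-y\<bar>" if "S \<in> Ss" for S x y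
  proof -
    have "\<bar>p*x - p*y\<bar> \<le> (1/2)*\<bar>x-y\<bar>" "\<bar>q*x - q*y\<bar> \<le> (1/2)*\<bar>x-y\<bar>"
    proof -
      have "(p*2)*\<bar>x-y\<bar> \<le> 1*\<bar>x-y\<bar>" "(q*2)*\<bar>x-y\<bar> \<le> 1*\<bar>x-y\<bar>"
        using pq by (intro mult_right_mono; simp)+
      then show "\<bar>p*x - p*y\<bar> \<le> (1/2)*\<bar>x-y\<bar>" "\<bar>q*x - q*y\<bar> \<le> (1/2)*\<bar>x-y\<bar>"
        using pq by (auto simp: right_diff_distrib[symmetric] abs_mult)
    qed
    then show ?thesis using that unfolding Ss_def defs by (auto simp: algebra_simps)
  qed
  have uniq: "K1 = K2" if "compact K1" "K1 \<noteq> {}" "K1 = (\<Union>S\<in>Ss. S`K1)"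
      "compact K2" "K2 \<noteq> {}" "K2 = (\<Union>S\<in>Ss. S`K2)" for K1 K2
    using ifs_sub[of Ss "1/2" K1 K2] ifs_sub[of Ss "1/2" K2 K1] lip that by auto
  have "\<exists>K. compact K \<and> K \<noteq> {} \<and> K = (\<Union>S\<in>Ss. S`K) \<and> K \<subseteq> {0..1}"
  proof (rule ifs_exists[of Ss "{0..1}" 0 S1])
    show "finite Ss" unfolding Ss_def by simp
    show "continuous_on UNIV S" if "S \<in> Ss" for S
      using that unfolding Ss_def defs by (auto intro!: continuous_intros)
    show "inj S" if "S \<in> Ss" for S
      using that pq unfolding Ss_def defs by (auto simp: inj_def)
    show "S ` {0..1} \<subseteq> {0..1}" if "S \<in> Ss" for S
    proof -
      have "p * x \<le> 1" "q * x \<le> 1" "p*x + 1 - p \<le> 1" "q*x + 1 - q \<le> 1"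
        "0 \<le> p*x + 1 - p" "0 \<le> q*x+1-q" if "0 \<le> x" "x \<le> 1" for x
      proof -
        have "p*x \<le> p*1" "q*x \<le> q*1" using pq that by (intro mult_left_mono; simp)+
        moreover have "0 \<le> p*x" "0 \<le> q*x" using pq that by simp_all
        ultimately have "p*x \<le> p" "q*x \<le> q" "0 \<le> p*x" "0 \<le> q*x" by (simp_all only: mult_1_right)
        then show "p * x \<le> 1" "q * x \<le> 1" "p*x + 1 - p \<le> 1" "q*x + 1 - q \<le> 1"
        "0 \<le> p*x + 1 - p" "0 \<le> q*x+1-q" using pq by linarith+
      qed
      then show ?thesis using that pq unfolding Ss_def defs by auto
    qed
  qed (use defs in \<open>auto simp: Ss_def\<close>)
  then obtain K0 where K0: "compact K0" "K0 \<noteq> {}" "K0 = (\<Union>S\<in>Ss. S`K0)" "K0 \<subseteq> {0..1}"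
    by blast
  have ex1: "\<exists>!K. K \<noteq> {} \<and> compact K \<and> K = (\<Union>S\<in>Ss. S`K)"
  proof (rule ex1I[of _ K0])
    show "K0 \<noteq> {} \<and> compact K0 \<and> K0 = (\<Union>S\<in>Ss. S`K0)" using K0 by simp
    fix K' assume "K' \<noteq> {} \<and> compact K' \<and> K' = (\<Union>S\<in>Ss. S`K')"
    then show "K' = K0" using uniq[of K' K0] K0 by simp
  qed
  have KP: "K \<noteq> {} \<and> compact K \<and> K = (\<Union>S\<in>Ss. S`K)"
    unfolding assms(9) attractor_def Ss_def[symmetric] by (rule theI'[OF ex1])
  then have KK0: "K = K0" using uniq[of K K0] K0 by simp
  have Kcpt: "compact K" and Kne: "K \<noteq> {}" using KP by auto
  have Keq: "K = S1`K \<union> S2`K \<union> S3`K \<union> S4`K" using KP unfolding Ss_def by auto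
  have K01: "K \<subseteq> {0..1}" using KK0 K0 by simp
  have i: "S1 \<circ> S2 = S2 \<circ> S1 \<and> S3 \<circ> S4 = S4 \<circ> S3"
    unfolding defs by (auto simp: fun_eq_iff algebra_simps)
  define w where "w = (\<lambda>x::real. 1 - x)"
  have ii: "K = w ` K"
  proof (rule uniq)
    show "compact (w ` K)" unfolding w_def
      by (intro compact_continuous_image Kcpt continuous_intros)
    have c1: "w ` S1 ` X = S3 ` w ` X" "w ` S2 ` X = S4 ` w ` X"
      "w ` S3 ` X = S1 ` w ` X" "w ` S4 ` X = S2 ` w ` X" for X
      unfolding w_def defs image_image by (auto intro!: image_cong simp: algebra_simps)
    have "w ` K = w ` (S1`K \<union> S2`K \<union> S3`K \<union> S4`K)" using Keq by simp
    also have "\<dots> = (\<Union>S\<in>Ss. S`(w ` K))" unfolding image_Un c1 Ss_def by auto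
    finally show "w ` K = (\<Union>S\<in>Ss. S`(w ` K))" .
  qed (use KP Kne in auto)
  have A12: "A \<subseteq> {1/2<..1}"
  proof
    fix a assume "a \<in> A"
    then obtain k where k: "k \<in> K" "a = p*k+1-p \<or> a = q*k+1-q"
      unfolding assms(10) defs by auto
    then have "0 \<le> k" "k \<le> 1" using K01 by auto
    then have "p*k \<le> p*1" "q*k \<le> q*1" "0 \<le> p*k" "0 \<le> q*k" using pq
      by (auto intro!: mult_left_mono)
    then show "a \<in> {1/2<..1}" using k pq by auto
  qed
  have iii: "\<forall>S\<in>{S1, S2}. \<forall>m n :: int. m \<noteq> n \<longrightarrow> int_pow S m ` A \<inter> int_pow S n ` A = {}"
    using disj_int_pow[OF pq(1,2) A12] disj_int_pow[OF pq(3,4) A12] unfolding defs by auto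
  have pK: "p^m * x \<in> K" if "x \<in> K" for m x
  proof (induction m)
    case (Suc m) then have "p * (p^m*x) \<in> S1 ` K" unfolding defs by blast
    then show ?case using Keq by (auto simp: mult.assoc)
  qed (use that in simp)
  have qK: "q^m * x \<in> K" if "x \<in> K" for m x
  proof (induction m)
    case (Suc m) then have "q * (q^m*x) \<in> S2 ` K" unfolding defs by blast
    then show ?case using Keq by (auto simp: mult.assoc)
  qed (use that in simp)
  have iv: "\<forall>m n :: nat. (S1 ^^ m \<circ> S2 ^^ n) ` K \<subseteq> (S1 ^^ m) ` K \<inter> (S2 ^^ n) ` K"
  proof (intro allI subsetI)
    fix m n x assume "x \<in> (S1 ^^ m \<circ> S2 ^^ n) ` K"
    then obtain k where k: "k \<in> K" "x = p^m * (q^n * k)" unfolding defs funpow_scale by auto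
    have "x = q^n * (p^m * k)" using k by simp
    then show "x \<in> (S1 ^^ m) ` K \<inter> (S2 ^^ n) ` K"
      using k pK qK unfolding defs funpow_scale by auto
  qed
  have AK: "A \<subseteq> K" using Keq assms(10) by auto
  have v: "K - {0} = (\<Union>m::nat. \<Union>n::nat. (S1 ^^ m \<circ> S2 ^^ n) ` A)"
  proof
    show "(\<Union>m::nat. \<Union>n::nat. (S1 ^^ m \<circ> S2 ^^ n) ` A) \<subseteq> K - {0}"
    proof
      fix x assume "x \<in> (\<Union>m::nat. \<Union>n::nat. (S1 ^^ m \<circ> S2 ^^ n) ` A)"
      then obtain m n a where a: "a \<in> A" "x = p^m * (q^n * a)"
        unfolding defs funpow_scale by auto
      have "a > 0" using a A12 by force
      then have "x \<noteq> 0" using a pq by simp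
      moreover have "x \<in> K" using a AK pK qK by auto
      ultimately show "x \<in> K - {0}" by simp
    qed
    define U where "U = (\<Union>m::nat. \<Union>n::nat. (S1 ^^ m \<circ> S2 ^^ n) ` A)"
    have U: "x \<in> U \<longleftrightarrow> (\<exists>m n a. a \<in> A \<and> x = p^m * (q^n * a))" for x
      unfolding U_def defs funpow_scale by auto
    have claim: "\<forall>x\<in>K. x > (1/2)^N \<longrightarrow> x \<in> U" for N
    proof (induction N)
      case 0 then show ?case using K01 by auto
    next
      case (Suc N)
      show ?case
      proof (intro ballI impI)
        fix x assume x: "x \<in> K" "(1/2)^Suc N < x"
        have "x \<in> A \<or> x \<in> S1`K \<or> x \<in> S2`K" using Keq x(1) assms(10) by blast
        then consider "x \<in> A" | y where "y \<in> K" "x = p*y" | y where "y \<in> K" "x = q*y"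
          using defs(1,2) by auto
        then show "x \<in> U"
        proof cases
          case 1 then show ?thesis unfolding U by (rule_tac x=0 in exI, rule_tac x=0 in exI) auto
        next
          case 2
          have "(1/2)^Suc N < p * y" using x 2 by simp
          also have "\<dots> \<le> (1/2) * y" using pq 2 K01 by (intro mult_right_mono) auto
          finally have "(1/2)^N < y" by simp
          then obtain m n a where "a \<in> A" "y = p^m * (q^n * a)" using Suc 2 U by blast
          then show ?thesis unfolding U using 2
            by (rule_tac x="Suc m" in exI, rule_tac x=n in exI) auto
        next
          case 3
          have "(1/2)^Suc N < q * y" using x 3 by simp
          also have "\<dots> \<le> (1/2) * y" using pq 3 K01 by (intro mult_right_mono) auto
          finally have "(1/2)^N < y" by simp
          then obtain m n a where "a \<in> A" "y = p^m * (q^n * a)" using Suc 3 U by blast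
          then show ?thesis unfolding U using 3
            by (rule_tac x="m" in exI, rule_tac x="Suc n" in exI) (auto simp: algebra_simps)
        qed
      qed
    qed
    show "K - {0} \<subseteq> U"
    proof
      fix x assume x: "x \<in> K - {0}"
      then have "x > 0" using K01 by force
      then obtain N where "(1/2::real)^N < x" using real_arch_pow_inv[of x "1/2"] by auto
      then show "x \<in> U" using claim x by blast
    qed
  qed
  show ?thesis using i ii iii iv v unfolding w_def by blast
qed
end
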